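(* Let $\mu$ be a nonatomic positive Radon measure on $\mathbb{R}$ and let $g\in\Lambda_\mu$ with seminorm $M$. For $a<b$ let $g_{ab}(x)=\frac{b-x}{b-a}g(a)+\frac{x-a}{b-a}g(b)$. Then $\sup_{x\in[a,b]}|g(x)-g_{ab}(x)|\le M\mu([a,b])$ for all $a<b$. Conversely, if a continuous $g$ satisfies $\sup_{[a,b]}|g-g_{ab}|\le M\mu([a,b])$ for all $a<b$, then $g\in\Lambda_\mu$ with seminorm at most $2M$.
   Context: For a nonatomic positive Radon measure $\mu$ on $\mathbb{R}$, $\Lambda_\mu$ is the class of continuous $g\colon\mathbb{R}\to\mathbb{R}$ for which there is $M>0$ with $|g(x+h)-2g(x)+g(x-h)|\le M\mu([x-h,x+h])$ for all $x\in\mathbb{R}$, $h\ge0$; the smallest such $M$ is the seminorm of $g$ in $\Lambda_\mu$. *)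

theory Defs
  imports "HOL-Analysis.Analysis"
begin

text \<open>A nonatomic positive Radon measure on the real line: a Borel measure that is
  finite on compact intervals (locally finite; on \<real> this is equivalent to Radon)
  and gives zero mass to every singleton.\<close>
definition nonatomic_radon :: "real measure \<Rightarrow> bool" where
  "nonatomic_radon mu \<longleftrightarrow> sets mu = sets borel
     \<and> (\<forall>a b. emeasure mu {a..b} < \<infinity>)
     \<and> (\<forall>x. emeasure mu {x} = 0)"

definition lambda_bound :: "real measure \<Rightarrow> (real \<Rightarrow> real) \<Rightarrow> real \<Rightarrow> bool" where
  "lambda_bound mu g M \<longleftrightarrow>
     (\<forall>x h. h \<ge> 0 \<longrightarrow> \<bar>g (x + h) - 2 * g x + g (x - h)\<bar> \<le> M * measure mu {x - h..x + h})"

definition Lambda_mu :: "real measure \<Rightarrow> (real \<Rightarrow> real) set" where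
  "Lambda_mu mu = {g. continuous_on UNIV g \<and> (\<exists>M>0. lambda_bound mu g M)}"

text \<open>Seminorm: the smallest admissible constant (infimum of admissible nonnegative constants;
  it is attained since the condition is closed in M).\<close>
definition lambda_seminorm :: "real measure \<Rightarrow> (real \<Rightarrow> real) \<Rightarrow> real" where
  "lambda_seminorm mu g = Inf {M. M \<ge> 0 \<and> lambda_bound mu g M}"

definition interp :: "(real \<Rightarrow> real) \<Rightarrow> real \<Rightarrow> real \<Rightarrow> real \<Rightarrow> real" where
  "interp g a b x = (b - x) / (b - a) * g a + (x - a) / (b - a) * g b"

end

theory Submission
  imports Defs
begin

lemma meas_mono:
  assumes "nonatomic_radon mu" "a \<le> c" "d \<le> b"
  shows "measure mu {c..d} \<le> measure mu {a..b}"
proof -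
  have s: "sets mu = sets borel" and f: "emeasure mu {a..b} < \<infinity>"
    using assms(1) unfolding nonatomic_radon_def by auto
  have "emeasure mu {c..d} \<le> emeasure mu {a..b}"
    by (rule emeasure_mono) (use assms s in auto)
  thus ?thesis unfolding measure_def using f by (simp add: enn2real_mono)
qed

lemma semi_adm:
  assumes "g \<in> Lambda_mu mu"
  shows "lambda_bound mu g (lambda_seminorm mu g) \<and> lambda_seminorm mu g \<ge> 0"
proof -
  obtain M where M: "M > 0" "lambda_bound mu g M" using assms unfolding Lambda_mu_def by auto
  let ?S = "{M. M \<ge> 0 \<and> lambda_bound mu g M}"
  have "M \<in> ?S" using M by auto
  hence ne: "?S \<noteq> {}" by auto
  have nn: "lambda_seminorm mu g \<ge> 0" unfolding lambda_seminorm_def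
    by (rule cInf_greatest[OF ne]) auto
  have "lambda_bound mu g (lambda_seminorm mu g)"
    unfolding lambda_bound_def
  proof (intro allI impI)
    fix x h :: real assume h: "h \<ge> 0"
    let ?D = "\<bar>g (x + h) - 2 * g x + g (x - h)\<bar>"
    let ?m = "measure mu {x - h..x + h}"
    have m0: "?m \<ge> 0" by simp
    show "?D \<le> lambda_seminorm mu g * ?m"
    proof (cases "?m = 0")
      case True
      have "?D \<le> M * ?m" using M h unfolding lambda_bound_def by blast
      thus ?thesis using True by simp
    next
      case False
      hence mp: "?m > 0" using m0 by linarith
      have "?D / ?m \<le> lambda_seminorm mu g" unfolding lambda_seminorm_def
      proof (rule cInf_greatest[OF ne])
        fix N assume "N \<in> ?S"
        hence "?D \<le> N * ?m" using h unfolding lambda_bound_def by auto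
        thus "?D / ?m \<le> N" using mp by (simp add: divide_le_eq)
      qed
      thus ?thesis using mp by (simp add: divide_le_eq mult.commute)
    qed
  qed
  thus ?thesis using nn by auto
qed

lemma key:
  fixes g :: "real \<Rightarrow> real"
  assumes mu: "nonatomic_radon mu" and S: "lambda_bound mu g S" "S \<ge> 0"
    and ab: "a < b" and x0: "x0 \<in> {a..b}"
    and mx: "\<forall>y\<in>{a..b}. \<bar>g y - interp g a b y\<bar> \<le> \<bar>g x0 - interp g a b x0\<bar>"
  shows "\<bar>g x0 - interp g a b x0\<bar> \<le> S * measure mu {a..b}"
proof -
  define phi where "phi y = g y - interp g a b y" for y
  define h where "h = min (x0 - a) (b - x0)"
  have h0: "h \<ge> 0" using x0 by (auto simp: h_def)
  have in1: "x0 + h \<in> {a..b}" "x0 - h \<in> {a..b}" using x0 by (auto simp: h_def)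
  have il: "interp g a b y = g a + (y - a) * ((g b - g a) / (b - a))" for y
  proof -
    have d: "b - a \<noteq> 0" using ab by simp
    have "interp g a b y = ((b - y) * g a + (y - a) * g b) / (b - a)"
      unfolding interp_def by (simp add: add_divide_distrib)
    also have "\<dots> = ((b - a) * g a + (y - a) * (g b - g a)) / (b - a)"
      by (simp add: algebra_simps)
    also have "\<dots> = g a + (y - a) * ((g b - g a) / (b - a))"
      using d by (simp add: add_divide_distrib)
    finally show ?thesis .
  qed
  have aff: "interp g a b (x0 + h) - 2 * interp g a b x0 + interp g a b (x0 - h) = 0"
  proof -
    obtain q where q: "\<And>y. interp g a b y = g a + (y - a) * q" using il by blast
    show ?thesis unfolding q by (simp add: algebra_simps)
  qed
  have eq: "phi (x0 + h) - 2 * phi x0 + phi (x0 - h) = g (x0 + h) - 2 * g x0 + g (x0 - h)"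
    using aff unfolding phi_def by (smt (verit))
  have pa: "phi a = 0" "phi b = 0" using ab unfolding phi_def interp_def by (auto simp: field_simps)
  have zero: "phi (x0 + h) = 0 \<or> phi (x0 - h) = 0"
    using pa unfolding h_def by (auto simp: min_def)
  have b1: "\<bar>phi (x0 + h)\<bar> \<le> \<bar>phi x0\<bar>" "\<bar>phi (x0 - h)\<bar> \<le> \<bar>phi x0\<bar>"
    using mx in1 unfolding phi_def by auto
  have "\<bar>phi x0\<bar> \<le> \<bar>phi (x0 + h) - 2 * phi x0 + phi (x0 - h)\<bar>"
    using zero b1 by linarith
  also have "\<dots> \<le> S * measure mu {x0 - h..x0 + h}"
    using eq S h0 unfolding lambda_bound_def by metis
  also have "\<dots> \<le> S * measure mu {a..b}"
    using meas_mono[OF mu] in1 S by (auto intro: mult_left_mono)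
  finally show ?thesis unfolding phi_def .
qed

lemma bdd:
  fixes g :: "real \<Rightarrow> real"
  assumes "continuous_on UNIV g" "a < b"
  shows "bdd_above ((\<lambda>x. \<bar>g x - interp g a b x\<bar>) ` {a..b})"
proof -
  have "continuous_on {a..b} (\<lambda>x. \<bar>g x - interp g a b x\<bar>)"
    unfolding interp_def using assms
    by (intro continuous_intros) (auto intro: continuous_on_subset simp: divide_inverse)
  hence "compact ((\<lambda>x. \<bar>g x - interp g a b x\<bar>) ` {a..b})"
    by (intro compact_continuous_image) auto
  thus ?thesis by (intro bounded_imp_bdd_above compact_imp_bounded)
qed

theorem mainTheorem12:
  fixes mu :: "real measure"
  assumes "nonatomic_radon mu"
  shows "(\<forall>g \<in> Lambda_mu mu. \<forall>a b. a < b \<longrightarrow>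
            (SUP x\<in>{a..b}. \<bar>g x - interp g a b x\<bar>) \<le> lambda_seminorm mu g * measure mu {a..b})
       \<and> (\<forall>g M. continuous_on UNIV g \<and> M \<ge> 0 \<and>
            (\<forall>a b. a < b \<longrightarrow> (SUP x\<in>{a..b}. \<bar>g x - interp g a b x\<bar>) \<le> M * measure mu {a..b})
            \<longrightarrow> g \<in> Lambda_mu mu \<and> lambda_seminorm mu g \<le> 2 * M)"
proof (intro conjI ballI allI impI)
  fix g and a b :: real assume g: "g \<in> Lambda_mu mu" and ab: "a < b"
  have c: "continuous_on UNIV g" using g unfolding Lambda_mu_def by auto
  have cc: "continuous_on {a..b} (\<lambda>x. \<bar>g x - interp g a b x\<bar>)"
    unfolding interp_def using c ab
    by (intro continuous_intros) (auto intro: continuous_on_subset simp: divide_inverse)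
  obtain x0 where x0: "x0 \<in> {a..b}" "\<forall>y\<in>{a..b}. \<bar>g y - interp g a b y\<bar> \<le> \<bar>g x0 - interp g a b x0\<bar>"
    using continuous_attains_sup[OF _ _ cc] ab by auto
  have K: "\<bar>g x0 - interp g a b x0\<bar> \<le> lambda_seminorm mu g * measure mu {a..b}"
    using key[OF assms _ _ ab x0] semi_adm[OF g] by auto
  show "(SUP x\<in>{a..b}. \<bar>g x - interp g a b x\<bar>) \<le> lambda_seminorm mu g * measure mu {a..b}"
    using ab x0(2) K by (intro cSUP_least) force+
next
  fix g M
  assume A: "continuous_on UNIV g \<and> 0 \<le> M \<and>
            (\<forall>a b. a < b \<longrightarrow> (SUP x\<in>{a..b}. \<bar>g x - interp g a b x\<bar>) \<le> M * measure mu {a..b})"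
  have LB: "lambda_bound mu g (2 * M)" unfolding lambda_bound_def
  proof (intro allI impI)
    fix x h :: real assume h: "h \<ge> 0"
    show "\<bar>g (x + h) - 2 * g x + g (x - h)\<bar> \<le> 2 * M * measure mu {x - h..x + h}"
    proof (cases "h = 0")
      case True thus ?thesis using A by simp
    next
      case False
      hence hp: "x - h < x + h" using h by simp
      have "\<bar>g x - interp g (x-h) (x+h) x\<bar> \<le> (SUP y\<in>{x-h..x+h}. \<bar>g y - interp g (x-h) (x+h) y\<bar>)"
        using hp by (intro cSUP_upper bdd) (use A hp in auto)
      also have "\<dots> \<le> M * measure mu {x - h..x + h}" using A hp by auto
      finally have B: "\<bar>g x - interp g (x-h) (x+h) x\<bar> \<le> M * measure mu {x - h..x + h}" .
      have "interp g (x-h) (x+h) x = (g (x-h) + g (x+h)) / 2"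
        using hp unfolding interp_def by (simp add: field_simps)
      hence E: "g (x + h) - 2 * g x + g (x - h) = -2 * (g x - interp g (x-h) (x+h) x)" by simp
      have "\<bar>g (x + h) - 2 * g x + g (x - h)\<bar> = 2 * \<bar>g x - interp g (x-h) (x+h) x\<bar>"
        unfolding E abs_mult by simp
      with B show ?thesis by simp
    qed
  qed
  have LB1: "lambda_bound mu g (2 * M + 1)"
    using LB A unfolding lambda_bound_def
    by (meson add_increasing2 order_trans le_add_same_cancel1 measure_nonneg mult_right_mono zero_le_one)
  show "g \<in> Lambda_mu mu" unfolding Lambda_mu_def using A LB1
    by (auto intro!: exI[of _ "2*M+1"])
  show "lambda_seminorm mu g \<le> 2 * M" unfolding lambda_seminorm_def
    using A LB by (intro cInf_lower) auto
qed

end
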